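(* Let $0<\alpha<1$ and let $q,r\in\mathbb{N}^+$. For $n\in\mathbb{Z}$ define $$I_{n,q}^{r}=\begin{cases}\dfrac{1}{\Gamma(1-\alpha)}\displaystyle\int_{0}^{1}(n+1-s)^{-\alpha}\,\frac{\mathrm{d}}{\mathrm{d}s}\binom{s-q+r-1}{r}\,\mathrm{d}s, & n\ge 0,\\[2mm] 0, & n<0,\end{cases}$$ and define backward differences in $n$ by $\nabla^{0}I_{n,q}^{r}=I_{n,q}^{r}$ and $\nabla^{k}I_{n,q}^{r}=\nabla^{k-1}I_{n,q}^{r}-\nabla^{k-1}I_{n-1,q}^{r}$ for $k\ge1$. Then for every $k\in\mathbb{N}$ and every $n\ge k$: (i) if $r\le q$, then $(-1)^{k+r+1}\nabla^{k}I_{n,q}^{r}\ge 0$; (ii) if $r>q$, then $(-1)^{k+q+1}\nabla^{k}I_{n,q}^{r}\ge 0$.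
   Context: For real $x$ and $r\in\mathbb{N}$, $\binom{x}{r}=\frac{x(x-1)\cdots(x-r+1)}{r!}$ is the binomial coefficient viewed as a polynomial in $x$; thus $\binom{s-q+r-1}{r}$ is a polynomial in $s$ of degree $r$. *)

theory Defs
  imports "HOL-Analysis.Analysis"
begin

definition I_coef :: "real \<Rightarrow> nat \<Rightarrow> nat \<Rightarrow> int \<Rightarrow> real" where
  "I_coef \<alpha> q r n =
     (if n \<ge> 0 then
        (1 / Gamma (1 - \<alpha>)) *
        integral {0..1} (\<lambda>s. (real_of_int n + 1 - s) powr (- \<alpha>) *
                              deriv (\<lambda>x. (x - real q + real r - 1) gchoose r) s)
      else 0)"

fun bdiff :: "nat \<Rightarrow> (int \<Rightarrow> real) \<Rightarrow> int \<Rightarrow> real" where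
  "bdiff 0 f n = f n"
| "bdiff (Suc k) f n = bdiff k f n - bdiff k f (n - 1)"

end

theory Submission
  imports Defs
begin


definition Tb :: "(real \<Rightarrow> real) \<Rightarrow> real \<Rightarrow> real" where
  "Tb f x = f x - f (x - 1)"

lemma bdiff_Suc': "bdiff (Suc k) f n = bdiff k (\<lambda>m. f m - f (m - 1)) n"
proof (induction k arbitrary: n)
  case 0 then show ?case by simp
next
  case (Suc k)
  have "bdiff (Suc (Suc k)) f n = bdiff (Suc k) f n - bdiff (Suc k) f (n - 1)" by (rule bdiff.simps(2))
  also have "\<dots> = bdiff k (\<lambda>m. f m - f (m - 1)) n - bdiff k (\<lambda>m. f m - f (m - 1)) (n - 1)"
    using Suc.IH[of n] Suc.IH[of "n - 1"] by simp
  finally show ?case by simp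
qed

lemma bdiff_Tb: "bdiff k (\<lambda>m. g (real_of_int m)) n = (Tb ^^ k) g (real_of_int n)"
proof (induction k arbitrary: g)
  case 0 then show ?case by simp
next
  case (Suc k)
  have "bdiff (Suc k) (\<lambda>m. g (real_of_int m)) n = bdiff k (\<lambda>m. Tb g (real_of_int m)) n"
    unfolding bdiff_Suc' Tb_def by simp
  also have "\<dots> = (Tb ^^ Suc k) g (real_of_int n)"
    using Suc by (simp add: funpow_Suc_right del: funpow.simps)
  finally show ?case .
qed

lemma Tb_shift: "(Tb ^^ k) (\<lambda>x. f (x + c)) x = (Tb ^^ k) f (x + c)"
proof (induction k arbitrary: x)
  case 0 then show ?case by simp
next
  case (Suc k)
  show ?case using Suc by (simp add: Tb_def algebra_simps)
qed

definition CMs :: "real \<Rightarrow> nat \<Rightarrow> (real \<Rightarrow> real) \<Rightarrow> bool" where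
  "CMs a e f \<longleftrightarrow> (\<exists>D. (\<forall>x>a. D 0 x = f x) \<and>
      (\<forall>j x. x > a \<longrightarrow> (D j has_real_derivative D (Suc j) x) (at x)) \<and>
      (\<forall>j x. x > a \<longrightarrow> (-1) ^ (j + e) * D j x \<ge> 0))"

lemma CMs_mono_D:
  assumes der: "\<forall>j x. x > a \<longrightarrow> (D j has_real_derivative D (Suc j) x) (at x)"
    and sg: "\<forall>j x. x > a \<longrightarrow> (-1) ^ (j + e) * D j x \<ge> 0"
    and "a < x" "x \<le> y"
  shows "(-1) ^ (j + e) * D j y \<le> (-1) ^ (j + e) * D j x"
proof -
  have "(\<lambda>z. (-1) ^ (j + e) * D j z) x \<ge> (\<lambda>z. (-1) ^ (j + e) * D j z) y"
  proof (rule DERIV_nonpos_imp_nonincreasing[OF \<open>x \<le> y\<close>])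
    fix z assume z: "x \<le> z" "z \<le> y"
    then have za: "z > a" using assms by auto
    have "((\<lambda>z. (-1) ^ (j + e) * D j z) has_real_derivative (-1) ^ (j + e) * D (Suc j) z) (at z)"
      using der za by (auto intro: DERIV_cmult)
    moreover have "(-1) ^ (j + e) * D (Suc j) z \<le> 0"
      using sg za by (auto dest!: spec[of _ "Suc j"])
    ultimately show "\<exists>y. DERIV (\<lambda>z. (-1) ^ (j + e) * D j z) z :> y \<and> y \<le> 0" by blast
  qed
  then show ?thesis by simp
qed

lemma CMs_Tb:
  assumes "CMs a e f"
  shows "CMs (a + 1) (Suc e) (Tb f)"
proof -
  obtain D where D0: "\<forall>x>a. D 0 x = f x"
    and der: "\<forall>j x. x > a \<longrightarrow> (D j has_real_derivative D (Suc j) x) (at x)"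
    and sg: "\<forall>j x. x > a \<longrightarrow> (-1) ^ (j + e) * D j x \<ge> 0"
    using assms unfolding CMs_def by blast
  define D' where "D' j x = D j x - D j (x - 1)" for j x
  have "\<forall>x>a+1. D' 0 x = Tb f x" using D0 by (simp add: D'_def Tb_def)
  moreover have "\<forall>j x. x > a + 1 \<longrightarrow> (D' j has_real_derivative D' (Suc j) x) (at x)"
  proof (intro allI impI)
    fix j x assume x: "x > a + 1"
    have d1: "(D j has_real_derivative D (Suc j) x) (at x)" using der x by auto
    have d2: "(D j has_real_derivative D (Suc j) (x - 1)) (at (x + -1))" using der x by auto
    have d3: "((\<lambda>x. D j (x + -1)) has_real_derivative D (Suc j) (x - 1)) (at x)"
      using d2 DERIV_shift by blast
    show "(D' j has_real_derivative D' (Suc j) x) (at x)"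
      unfolding D'_def using DERIV_diff[OF d1 d3] by simp
  qed
  moreover have "\<forall>j x. x > a + 1 \<longrightarrow> (-1) ^ (j + Suc e) * D' j x \<ge> 0"
  proof (intro allI impI)
    fix j x assume x: "x > a + 1"
    have "(-1) ^ (j + e) * D j x \<le> (-1) ^ (j + e) * D j (x - 1)"
      by (rule CMs_mono_D[OF der sg]) (use x in auto)
    then show "(-1) ^ (j + Suc e) * D' j x \<ge> 0"
      by (simp add: D'_def algebra_simps)
  qed
  ultimately show ?thesis unfolding CMs_def by blast
qed

lemma CMs_iter: "CMs a e f \<Longrightarrow> CMs (a + real k) (e + k) ((Tb ^^ k) f)"
proof (induction k)
  case 0 then show ?case by simp
next
  case (Suc k)
  then have "CMs (a + real k + 1) (Suc (e + k)) (Tb ((Tb ^^ k) f))" by (intro CMs_Tb) auto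
  then show ?case by (simp add: algebra_simps)
qed

lemma CMs_sign: "CMs a e f \<Longrightarrow> x > a \<Longrightarrow> (-1) ^ e * f x \<ge> 0"
  unfolding CMs_def by (metis add_0)

lemma CMs_mono: "CMs a e f \<Longrightarrow> a < x \<Longrightarrow> x \<le> y \<Longrightarrow> (-1) ^ e * f y \<le> (-1) ^ e * f x"
proof -
  assume "CMs a e f" "a < x" "x \<le> y"
  then obtain D where D0: "\<forall>x>a. D 0 x = f x"
    and der: "\<forall>j x. x > a \<longrightarrow> (D j has_real_derivative D (Suc j) x) (at x)"
    and sg: "\<forall>j x. x > a \<longrightarrow> (-1) ^ (j + e) * D j x \<ge> 0"
    unfolding CMs_def by blast
  have "(-1) ^ (0 + e) * D 0 y \<le> (-1) ^ (0 + e) * D 0 x"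
    by (rule CMs_mono_D[OF der sg]) (use \<open>a < x\<close> \<open>x \<le> y\<close> in auto)
  then show ?thesis using D0 \<open>a < x\<close> \<open>x \<le> y\<close> by auto
qed

lemma CMs_powr:
  assumes "\<alpha> > 0"
  shows "CMs 0 0 (\<lambda>y. y powr (- \<alpha>))"
proof -
  define D where "D j y = (\<Prod>i<j. (- \<alpha> - real i)) * y powr (- \<alpha> - real j)" for j y
  have "\<forall>x>0. D 0 x = x powr (- \<alpha>)" by (simp add: D_def)
  moreover have "\<forall>j x. x > 0 \<longrightarrow> (D j has_real_derivative D (Suc j) x) (at x)"
  proof (intro allI impI)
    fix j and x :: real assume x: "x > 0"
    have "(D j has_real_derivative (\<Prod>i<j. (- \<alpha> - real i)) * ((- \<alpha> - real j) * x powr (- \<alpha> - real j - 1))) (at x)"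
      unfolding D_def by (intro DERIV_cmult has_real_derivative_powr x)
    moreover have "(\<Prod>i<j. (- \<alpha> - real i)) * ((- \<alpha> - real j) * x powr (- \<alpha> - real j - 1)) = D (Suc j) x"
      by (simp add: D_def algebra_simps)
    ultimately show "(D j has_real_derivative D (Suc j) x) (at x)" by simp
  qed
  moreover have "\<forall>j x. x > 0 \<longrightarrow> (-1) ^ (j + 0) * D j x \<ge> 0"
  proof (intro allI impI)
    fix j and x :: real assume x: "x > 0"
    have "(-1) ^ j * (\<Prod>i<j. (- \<alpha> - real i)) = (\<Prod>i<j. (\<alpha> + real i))"
      using prod_uminus[of "\<lambda>i. \<alpha> + real i" "{..<j}"] by (simp add: algebra_simps)
    moreover have "(\<Prod>i<j. (\<alpha> + real i)) \<ge> 0" using assms by (intro prod_nonneg) auto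
    ultimately show "(-1) ^ (j + 0) * D j x \<ge> 0"
      unfolding D_def by (metis add_0_right mult.assoc mult_nonneg_nonneg powr_ge_zero)
  qed
  ultimately show ?thesis unfolding CMs_def by blast
qed



definition aR :: "nat \<Rightarrow> nat \<Rightarrow> nat \<Rightarrow> real" where
  "aR q r i = real q + real i + 1 - real r"
definition PP :: "nat \<Rightarrow> nat \<Rightarrow> real \<Rightarrow> real" where
  "PP q r x = (\<Prod>i\<in>{0..<r}. x - aR q r i) / fact r"
definition dPP :: "nat \<Rightarrow> nat \<Rightarrow> real \<Rightarrow> real" where
  "dPP q r x = (\<Sum>i\<in>{0..<r}. 1 * (\<Prod>j\<in>{0..<r}-{i}. x - aR q r j)) / fact r"
definition LL :: "nat \<Rightarrow> nat \<Rightarrow> real \<Rightarrow> real" where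
  "LL q r x = (\<Sum>i\<in>{0..<r}. 1 / (x - aR q r i))"

lemma PP_eq: "(x - real q + real r - 1) gchoose r = PP q r x"
  unfolding gbinomial_prod_rev PP_def aR_def
  by (intro arg_cong2[where f="(/)"] prod.cong) (auto simp: algebra_simps)

lemma PP_deriv: "(PP q r has_real_derivative dPP q r x) (at x)"
proof -
  have "((\<lambda>u. \<Prod>i\<in>{0..<r}. u - aR q r i) has_real_derivative
     (\<Sum>i\<in>{0..<r}. 1 * (\<Prod>j\<in>{0..<r}-{i}. x - aR q r j))) (at x)"
    by (rule has_field_derivative_prod) (auto intro!: derivative_eq_intros)
  then show ?thesis unfolding PP_def dPP_def by (intro DERIV_cdivide)
qed

lemma deriv_gchoose: "deriv (\<lambda>x. (x - real q + real r - 1) gchoose r) s = dPP q r s"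
  unfolding PP_eq using PP_deriv by (metis DERIV_imp_deriv ext)

lemma dPP_cont: "continuous_on A (dPP q r)"
  unfolding dPP_def by (intro continuous_intros) auto

lemma PP_cont: "continuous_on A (PP q r)"
  unfolding PP_def by (intro continuous_intros) auto

lemma dPP_eq:
  assumes "\<And>i. i < r \<Longrightarrow> x \<noteq> aR q r i"
  shows "dPP q r x = PP q r x * LL q r x"
proof -
  have "((\<lambda>u. \<Prod>i\<in>{0..<r}. u - aR q r i) has_real_derivative
     (\<Prod>i\<in>{0..<r}. x - aR q r i) * (\<Sum>i\<in>{0..<r}. 1 / (x - aR q r i))) (at x)"
  proof -
    have nz: "\<And>i. i \<in> {0..<r} \<Longrightarrow> x - aR q r i \<noteq> 0" using assms by auto
    have d: "\<And>i. i \<in> {0..<r} \<Longrightarrow> ((\<lambda>u. u - aR q r i) has_real_derivative 1) (at x)"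
      by (auto intro!: derivative_eq_intros)
    show ?thesis
      using has_field_derivative_prod'[of "{0..<r}" "\<lambda>i u. u - aR q r i" x "\<lambda>_. 1", OF nz d] by simp
  qed
  then have "(PP q r has_real_derivative PP q r x * LL q r x) (at x)"
    unfolding PP_def LL_def using DERIV_cdivide by (fastforce simp: field_simps)
  then show ?thesis using PP_deriv DERIV_unique by blast
qed

lemma aR_cases: "aR q r i \<le> 0 \<or> aR q r i \<ge> 1"
proof (cases "q + i + 1 \<le> r")
  case True
  then have "real q + real i + 1 \<le> real r" by linarith
  then show ?thesis unfolding aR_def by auto
next
  case False
  then have "real q + real i + 1 \<ge> real r + 1" by linarith
  then show ?thesis unfolding aR_def by auto
qed

lemma LL_mono:
  assumes "0 < s" "s \<le> t" "t < 1"
  shows "LL q r t \<le> LL q r s"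
  unfolding LL_def
proof (rule sum_mono)
  fix i
  consider "aR q r i \<le> 0" | "aR q r i \<ge> 1" using aR_cases by blast
  then show "1 / (t - aR q r i) \<le> 1 / (s - aR q r i)"
  proof cases
    case 1 then show ?thesis using assms by (intro divide_left_mono) auto
  next
    case 2
    then have "s - aR q r i < 0" "t - aR q r i < 0" "s - aR q r i \<le> t - aR q r i" using assms by auto
    then show ?thesis by (simp add: divide_simps)
  qed
qed

lemma case1_sign:
  assumes "r \<le> q" "0 < s" "s < 1"
  shows "(-1) ^ (r + 1) * dPP q r s \<ge> 0"
proof -
  have ai: "aR q r i \<ge> 1" if "i < r" for i using assms(1) unfolding aR_def by auto
  have "dPP q r s = PP q r s * LL q r s"
  proof (rule dPP_eq)
    fix i assume "i < r"
    then have "aR q r i \<ge> 1" by (rule ai)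
    then show "s \<noteq> aR q r i" using assms by auto
  qed
  moreover have "LL q r s \<le> 0" unfolding LL_def
  proof (intro sum_nonpos)
    fix i assume "i \<in> {0..<r}"
    then have "aR q r i \<ge> 1" using ai by auto
    then have "s - aR q r i < 0" using assms by auto
    then show "1 / (s - aR q r i) \<le> 0" by (simp add: divide_le_0_iff)
  qed
  moreover have "(-1) ^ r * PP q r s \<ge> 0"
  proof -
    have "(-1) ^ r * (\<Prod>i\<in>{0..<r}. s - aR q r i) = (\<Prod>i\<in>{0..<r}. aR q r i - s)"
      using prod_uminus[of "\<lambda>i. s - aR q r i" "{0..<r}"] by simp
    moreover have "(\<Prod>i\<in>{0..<r}. aR q r i - s) \<ge> 0"
      using ai assms by (intro prod_nonneg) force
    ultimately show ?thesis unfolding PP_def by (simp add: mult.commute)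
  qed
  ultimately show ?thesis
    using mult_nonneg_nonpos[of "(-1) ^ r * PP q r s" "LL q r s"] by (simp add: algebra_simps)
qed

lemma case2_PPsign:
  assumes "q < r" "0 < s" "s < 1"
  shows "(-1) ^ q * PP q r s > 0"
proof -
  have split: "(\<Prod>i\<in>{0..<r}. s - aR q r i) = (\<Prod>i\<in>{0..<r-q}. s - aR q r i) * (\<Prod>i\<in>{r-q..<r}. s - aR q r i)"
    using prod.atLeastLessThan_concat[of 0 "r-q" r "\<lambda>i. s - aR q r i"] assms by simp
  have p1: "(\<Prod>i\<in>{0..<r-q}. s - aR q r i) > 0"
  proof (intro prod_pos)
    fix i assume "i \<in> {0..<r-q}"
    then have "real q + real i + 1 \<le> real r" by auto
    then show "s - aR q r i > 0" using assms unfolding aR_def by auto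
  qed
  have "(-1) ^ q * (\<Prod>i\<in>{r-q..<r}. s - aR q r i) = (\<Prod>i\<in>{r-q..<r}. aR q r i - s)"
    using prod_uminus[of "\<lambda>i. s - aR q r i" "{r-q..<r}"] assms by simp
  moreover have "(\<Prod>i\<in>{r-q..<r}. aR q r i - s) > 0"
  proof (intro prod_pos)
    fix i assume "i \<in> {r-q..<r}"
    then have "real q + real i \<ge> real r" by auto
    then show "aR q r i - s > 0" using assms unfolding aR_def by auto
  qed
  ultimately have "(-1) ^ q * (\<Prod>i\<in>{0..<r}. s - aR q r i) > 0"
    unfolding split using p1 by (metis mult.left_commute mult_pos_pos)
  then show ?thesis unfolding PP_def by simp
qed

lemma case2_noroot:
  assumes "0 < s" "s < 1"
  shows "s \<noteq> aR q r i"
  using aR_cases[of q r i] assms by auto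

lemma case2_PP0: assumes "q < r" shows "PP q r 0 = 0"
proof -
  have "(\<Prod>i\<in>{0..<r}. 0 - aR q r i) = 0"
  proof (rule prod_zero)
    have "real (r - q - 1) = real r - real q - 1" using assms by (simp add: of_nat_diff)
    then show "\<exists>i\<in>{0..<r}. 0 - aR q r i = 0" using assms unfolding aR_def
      by (intro bexI[of _ "r - q - 1"]) auto
  qed auto
  then show ?thesis unfolding PP_def by simp
qed

lemma case2_PP1: assumes "q < r" "q \<ge> 1" shows "PP q r 1 = 0"
proof -
  have "(\<Prod>i\<in>{0..<r}. 1 - aR q r i) = 0"
  proof (rule prod_zero)
    have "real (r - q) = real r - real q" using assms by (simp add: of_nat_diff)
    then show "\<exists>i\<in>{0..<r}. 1 - aR q r i = 0" using assms unfolding aR_def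
      by (intro bexI[of _ "r - q"]) auto
  qed auto
  then show ?thesis unfolding PP_def by simp
qed



lemma powr_integrable:
  assumes "0 < \<alpha>" "\<alpha> < 1" "(m::real) \<ge> 0"
  shows "(\<lambda>s. (m + 1 - s) powr (-\<alpha>)) integrable_on {0..1}"
proof -
  define F where "F s = - ((m + 1 - s) powr (1 - \<alpha>)) / (1 - \<alpha>)" for s
  have "((\<lambda>s. (m + 1 - s) powr (-\<alpha>)) has_integral (F 1 - F 0)) {0..1}"
  proof (rule fundamental_theorem_of_calculus_interior)
    show "continuous_on {0..1} F" unfolding F_def
      using assms by (intro continuous_intros continuous_on_powr') auto
  next
    fix x :: real assume x: "x \<in> {0<..<1}"
    then have pos: "m + 1 - x > 0" using assms by auto
    have d1: "((\<lambda>z. z powr (1 - \<alpha>)) has_real_derivative (1 - \<alpha>) * (m + 1 - x) powr (1 - \<alpha> - 1)) (at (m + 1 - x))"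
      by (rule has_real_derivative_powr[OF pos])
    have d2: "((\<lambda>s. m + 1 - s) has_real_derivative -1) (at x)"
      by (auto intro!: derivative_eq_intros)
    have d3: "((\<lambda>s. (m + 1 - s) powr (1 - \<alpha>)) has_real_derivative
            (1 - \<alpha>) * (m + 1 - x) powr (1 - \<alpha> - 1) * (-1)) (at x)"
      using DERIV_chain2[where f="\<lambda>z. z powr (1 - \<alpha>)" and g="\<lambda>s. m + 1 - s", OF d1 d2] by simp
    have d4: "(F has_real_derivative - ((1 - \<alpha>) * (m + 1 - x) powr (1 - \<alpha> - 1) * (-1)) / (1 - \<alpha>)) (at x)"
      unfolding F_def by (intro DERIV_cdivide DERIV_minus d3)
    have "- ((1 - \<alpha>) * (m + 1 - x) powr (1 - \<alpha> - 1) * (-1)) / (1 - \<alpha>) = (m + 1 - x) powr (-\<alpha>)"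
      using assms by (simp add: field_simps)
    then have "(F has_real_derivative (m + 1 - x) powr (-\<alpha>)) (at x)" using d4 by simp
    then show "(F has_vector_derivative (m + 1 - x) powr (-\<alpha>)) (at x)"
      by (simp add: has_real_derivative_iff_has_vector_derivative)
  qed simp
  then show ?thesis by blast
qed

lemma INT:
  assumes "0 < \<alpha>" "\<alpha> < 1" "(m::real) \<ge> 0"
  shows "(\<lambda>s. (m + 1 - s) powr (-\<alpha>) * dPP q r s) integrable_on {0..1}"
proof -
  have g: "(\<lambda>s. (m + 1 - s) powr (-\<alpha>)) absolutely_integrable_on {0..1}"
    by (rule nonnegative_absolutely_integrable_1[OF powr_integrable[OF assms]]) auto
  have "(\<lambda>s. dPP q r s * (m + 1 - s) powr (-\<alpha>)) absolutely_integrable_on {0..1}"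
  proof (rule absolutely_integrable_bounded_measurable_product_real[OF _ _ _ g])
    show "dPP q r \<in> borel_measurable (lebesgue_on {0..1})"
      by (rule continuous_imp_measurable_on_sets_lebesgue[OF dPP_cont]) auto
    show "bounded (dPP q r ` {0..1})"
      by (intro compact_imp_bounded compact_continuous_image dPP_cont) auto
  qed auto
  then show ?thesis
    by (simp add: absolutely_integrable_on_def mult.commute)
qed

definition Gk :: "real \<Rightarrow> int \<Rightarrow> real \<Rightarrow> real" where
  "Gk \<alpha> m s = (real_of_int m + 1 - s) powr (-\<alpha>)"

lemma linear_step:
  assumes "0 < \<alpha>" "\<alpha> < 1"
  shows "\<forall>n. int k \<le> n \<longrightarrow>
    (\<lambda>s. bdiff k (\<lambda>m. Gk \<alpha> m s) n * dPP q r s) integrable_on {0..1} \<and>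
    bdiff k (I_coef \<alpha> q r) n = (1 / Gamma (1 - \<alpha>)) * integral {0..1} (\<lambda>s. bdiff k (\<lambda>m. Gk \<alpha> m s) n * dPP q r s)"
proof (induction k)
  case 0
  show ?case
  proof (intro allI impI conjI)
    fix n :: int assume n: "int 0 \<le> n"
    show "(\<lambda>s. bdiff 0 (\<lambda>m. Gk \<alpha> m s) n * dPP q r s) integrable_on {0..1}"
      using INT[OF assms, of "real_of_int n"] n by (simp add: Gk_def)
    show "bdiff 0 (I_coef \<alpha> q r) n = 1 / Gamma (1 - \<alpha>) * integral {0..1} (\<lambda>s. bdiff 0 (\<lambda>m. Gk \<alpha> m s) n * dPP q r s)"
      using n by (simp add: I_coef_def Gk_def deriv_gchoose)
  qed
next
  case (Suc k)
  show ?case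
  proof (intro allI impI)
    fix n :: int assume n: "int (Suc k) \<le> n"
    have A: "(\<lambda>s. bdiff k (\<lambda>m. Gk \<alpha> m s) n * dPP q r s) integrable_on {0..1}"
      and A': "bdiff k (I_coef \<alpha> q r) n = (1 / Gamma (1 - \<alpha>)) * integral {0..1} (\<lambda>s. bdiff k (\<lambda>m. Gk \<alpha> m s) n * dPP q r s)"
      using Suc n by auto
    have B: "(\<lambda>s. bdiff k (\<lambda>m. Gk \<alpha> m s) (n - 1) * dPP q r s) integrable_on {0..1}"
      and B': "bdiff k (I_coef \<alpha> q r) (n - 1) = (1 / Gamma (1 - \<alpha>)) * integral {0..1} (\<lambda>s. bdiff k (\<lambda>m. Gk \<alpha> m s) (n - 1) * dPP q r s)"
      using Suc n by auto
    have eq: "(\<lambda>s. bdiff (Suc k) (\<lambda>m. Gk \<alpha> m s) n * dPP q r s) =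
       (\<lambda>s. bdiff k (\<lambda>m. Gk \<alpha> m s) n * dPP q r s - bdiff k (\<lambda>m. Gk \<alpha> m s) (n - 1) * dPP q r s)"
      by (simp add: left_diff_distrib)
    show "(\<lambda>s. bdiff (Suc k) (\<lambda>m. Gk \<alpha> m s) n * dPP q r s) integrable_on {0..1} \<and>
      bdiff (Suc k) (I_coef \<alpha> q r) n = 1 / Gamma (1 - \<alpha>) * integral {0..1} (\<lambda>s. bdiff (Suc k) (\<lambda>m. Gk \<alpha> m s) n * dPP q r s)"
      unfolding eq using integrable_diff[OF A B] integral_diff[OF A B] A' B'
      by (simp add: right_diff_distrib)
  qed
qed



lemma NN:
  fixes F :: "real \<Rightarrow> real"
  assumes "\<And>s. 0 < s \<Longrightarrow> s < 1 \<Longrightarrow> 0 \<le> c * F s"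
  shows "0 \<le> c * integral {0..1} F"
proof -
  define G where "G s = (if s \<in> {0, 1} then 0 else c * F s)" for s :: real
  have "c * integral {0..1} F = integral {0..1} (\<lambda>s. c * F s)" by simp
  also have "\<dots> = integral {0..1} G"
    by (rule integral_spike[of "{0,1}"]) (auto simp: G_def)
  also have "\<dots> \<ge> 0"
  proof (cases "G integrable_on {0..1}")
    case True
    then show ?thesis
      by (rule integral_nonneg) (use assms in \<open>auto simp: G_def\<close>)
  qed (simp add: not_integrable_integral)
  finally show ?thesis .
qed

lemma Hform:
  "bdiff k (\<lambda>m. Gk \<alpha> m s) n = (Tb ^^ k) (\<lambda>y. y powr (-\<alpha>)) (real_of_int n + 1 - s)"
proof -
  have e: "(\<lambda>m. Gk \<alpha> m s) = (\<lambda>m. (\<lambda>x. (x + (1 - s)) powr (-\<alpha>)) (real_of_int m))"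
    by (auto simp: Gk_def algebra_simps)
  have "bdiff k (\<lambda>m. Gk \<alpha> m s) n = (Tb ^^ k) (\<lambda>x. (x + (1 - s)) powr (-\<alpha>)) (real_of_int n)"
    unfolding e by (rule bdiff_Tb)
  also have "\<dots> = (Tb ^^ k) (\<lambda>y. y powr (-\<alpha>)) (real_of_int n + (1 - s))"
    by (rule Tb_shift[where f="\<lambda>y. y powr (-\<alpha>)"])
  finally show ?thesis by (simp add: algebra_simps)
qed

lemma sign1:
  fixes P d :: real
  shows "(-1::real)^(k+r+1) * (P * d) = ((-1)^k * P) * ((-1)^(r+1) * d)"
  by (simp add: power_add mult_ac)

lemma sign_alg:
  fixes P H d :: real
  assumes "\<sigma> = (-1)^k" "\<tau> = (-1)^q"
  shows "(-1::real)^(k+q+1) * ((P - H) * d) = - ((\<sigma> * P - \<sigma> * H) * (\<tau> * d))"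
proof -
  have "(-1::real)^(k+q+1) = - (\<sigma> * \<tau>)" using assms by (simp add: power_add)
  then show ?thesis by (simp add: algebra_simps)
qed

theorem lemma2p4:
  fixes \<alpha> :: real and q r k :: nat and n :: int
  assumes "0 < \<alpha>" "\<alpha> < 1" "q \<ge> 1" "r \<ge> 1" "int k \<le> n"
  shows "(r \<le> q \<longrightarrow> (-1) ^ (k + r + 1) * bdiff k (I_coef \<alpha> q r) n \<ge> 0) \<and>
         (r > q \<longrightarrow> (-1) ^ (k + q + 1) * bdiff k (I_coef \<alpha> q r) n \<ge> 0)"
proof -
  define \<Phi> where "\<Phi> = (Tb ^^ k) (\<lambda>y. y powr (-\<alpha>))"
  define N where "N = real_of_int n"
  have Nk: "N \<ge> real k" using assms(5) unfolding N_def by linarith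
  have CM: "CMs (real k) k \<Phi>"
    using CMs_iter[OF CMs_powr[OF assms(1)], of k] unfolding \<Phi>_def by simp
  have Hs: "bdiff k (\<lambda>m. Gk \<alpha> m s) n = \<Phi> (N + 1 - s)" for s
    unfolding \<Phi>_def N_def by (rule Hform)
  have LL0: "(\<lambda>s. bdiff k (\<lambda>m. Gk \<alpha> m s) n * dPP q r s) integrable_on {0..1} \<and>
    bdiff k (I_coef \<alpha> q r) n = (1 / Gamma (1 - \<alpha>)) * integral {0..1} (\<lambda>s. bdiff k (\<lambda>m. Gk \<alpha> m s) n * dPP q r s)"
    using linear_step[OF assms(1,2), of k q r] assms(5) by blast
  have LS: "(\<lambda>s. \<Phi> (N + 1 - s) * dPP q r s) integrable_on {0..1}"
    and LS': "bdiff k (I_coef \<alpha> q r) n = (1 / Gamma (1 - \<alpha>)) * integral {0..1} (\<lambda>s. \<Phi> (N + 1 - s) * dPP q r s)"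
    using LL0 by (simp_all only: Hs)
  have gpos: "1 / Gamma (1 - \<alpha>) > 0" using assms by (simp add: Gamma_real_pos)
  have sgnPhi: "(-1) ^ k * \<Phi> (N + 1 - s) \<ge> 0" if "s < 1" for s
    by (rule CMs_sign[OF CM]) (use Nk that in auto)
  show ?thesis
  proof (intro conjI impI)
    assume rq: "r \<le> q"
    have X: "0 \<le> (-1) ^ (k + r + 1) * integral {0..1} (\<lambda>s. \<Phi> (N + 1 - s) * dPP q r s)"
    proof (rule NN)
      fix s :: real assume s: "0 < s" "s < 1"
      have "0 \<le> ((-1) ^ k * \<Phi> (N + 1 - s)) * ((-1) ^ (r + 1) * dPP q r s)"
        using sgnPhi[OF s(2)] case1_sign[OF rq s] by (rule mult_nonneg_nonneg)
      then show "0 \<le> (-1) ^ (k + r + 1) * (\<Phi> (N + 1 - s) * dPP q r s)"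
        by (simp only: sign1)
    qed
    have E: "(-1) ^ (k + r + 1) * bdiff k (I_coef \<alpha> q r) n = (1 / Gamma (1 - \<alpha>)) * ((-1) ^ (k + r + 1) * integral {0..1} (\<lambda>s. \<Phi> (N + 1 - s) * dPP q r s))"
      unfolding LS' by (simp only: mult.left_commute)
    show "(-1) ^ (k + r + 1) * bdiff k (I_coef \<alpha> q r) n \<ge> 0"
      unfolding E by (rule mult_nonneg_nonneg[OF less_imp_le[OF gpos] X])
  next
    assume qr: "q < r"
    define \<tau> :: real where "\<tau> = (-1) ^ q"
    define \<sigma> :: real where "\<sigma> = (-1) ^ k"
    define S where "S = {t. 0 < t \<and> t < 1 \<and> LL q r t \<ge> 0} \<union> {0}"
    define c where "c = Sup S"
    have Sne: "S \<noteq> {}" and Sbdd: "bdd_above S" unfolding S_def by (auto intro: bdd_aboveI[of _ 1])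
    have c0: "c \<ge> 0" unfolding c_def by (rule cSup_upper[OF _ Sbdd]) (simp add: S_def)
    have c1: "c \<le> 1" unfolding c_def by (rule cSup_least[OF Sne]) (auto simp: S_def)
    have dP: "dPP q r s = PP q r s * LL q r s" if "0 < s" "s < 1" for s
      by (rule dPP_eq) (use case2_noroot[OF that] in auto)
    have tauP: "\<tau> * PP q r s > 0" if "0 < s" "s < 1" for s
      unfolding \<tau>_def by (rule case2_PPsign[OF qr that])
    have below: "\<tau> * dPP q r s \<ge> 0" if "0 < s" "s < c" for s
    proof -
      obtain t where t: "t \<in> S" "s < t" using \<open>s < c\<close> less_cSup_iff[OF Sne Sbdd] unfolding c_def by blast
      then have t': "0 < t" "t < 1" "LL q r t \<ge> 0" using that unfolding S_def by auto
      have "LL q r s \<ge> LL q r t" by (rule LL_mono) (use that t t' in auto)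
      then have "LL q r s \<ge> 0" using t' by linarith
      moreover have "s < 1" using that c1 by auto
      ultimately have "0 \<le> (\<tau> * PP q r s) * LL q r s"
        using tauP[OF \<open>0 < s\<close>] mult_nonneg_nonneg[of "\<tau> * PP q r s" "LL q r s"] by linarith
      then show ?thesis using dP[OF \<open>0 < s\<close> \<open>s < 1\<close>] by (simp add: mult.assoc)
    qed
    have above: "\<tau> * dPP q r s \<le> 0" if "c < s" "s < 1" for s
    proof -
      have s0: "0 < s" using that c0 by auto
      have "s \<notin> S"
      proof
        assume "s \<in> S"
        then have "s \<le> c" unfolding c_def by (rule cSup_upper[OF _ Sbdd])
        then show False using that by auto
      qed
      then have "LL q r s < 0" using s0 that unfolding S_def by auto
      then have "(\<tau> * PP q r s) * LL q r s \<le> 0"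
        using tauP[OF s0 \<open>s < 1\<close>] mult_nonneg_nonpos[of "\<tau> * PP q r s" "LL q r s"] by linarith
      then show ?thesis using dP[OF s0 \<open>s < 1\<close>] by (simp add: mult.assoc)
    qed
    have PPd: "(PP q r has_real_derivative dPP q r x) (at x)" for x by (rule PP_deriv)
    have c1': "c < 1"
    proof (rule ccontr)
      assume "\<not> c < 1"
      then have cc: "c = 1" using c1 by auto
      have "(\<lambda>x. \<tau> * PP q r x) (1/2) \<le> (\<lambda>x. \<tau> * PP q r x) 1"
      proof (rule DERIV_nonneg_imp_increasing_open[where f="\<lambda>x. \<tau> * PP q r x"])
        fix x :: real assume "1/2 < x" "x < 1"
        then have "0 \<le> \<tau> * dPP q r x" using below[of x] cc by simp
        moreover have "((\<lambda>x. \<tau> * PP q r x) has_real_derivative \<tau> * dPP q r x) (at x)"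
          by (rule DERIV_cmult[OF PPd])
        ultimately show "\<exists>y. ((\<lambda>x. \<tau> * PP q r x) has_real_derivative y) (at x) \<and> 0 \<le> y"
          by blast
      next
        show "continuous_on {1/2..1} (\<lambda>x. \<tau> * PP q r x)"
          by (intro continuous_intros PP_cont)
      qed simp
      then show False using tauP[of "1/2"] case2_PP1[OF qr assms(3)] by simp
    qed
    define H where "H = \<Phi> (N + 1 - c)"
    have mono_lo: "\<sigma> * \<Phi> (N + 1 - s) \<le> \<sigma> * H" if "s < c" for s
      unfolding \<sigma>_def H_def by (rule CMs_mono[OF CM]) (use Nk that c1' in auto)
    have mono_hi: "\<sigma> * \<Phi> (N + 1 - s) \<ge> \<sigma> * H" if "c < s" "s < 1" for s
      unfolding \<sigma>_def H_def by (rule CMs_mono[OF CM]) (use Nk that in auto)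
    have intdP: "(dPP q r has_integral (PP q r 1 - PP q r 0)) {0..1}"
    proof (rule fundamental_theorem_of_calculus)
      fix x :: real
      show "(PP q r has_vector_derivative dPP q r x) (at x within {0..1})"
        using has_field_derivative_at_within[OF PPd, of x "{0..1}"]
        by (simp add: has_real_derivative_iff_has_vector_derivative)
    qed simp
    then have dPint: "dPP q r integrable_on {0..1}" by blast
    have dP0: "integral {0..1} (dPP q r) = 0"
      using integral_unique[OF intdP] case2_PP0[OF qr] case2_PP1[OF qr assms(3)] by simp
    have "integral {0..1} (\<lambda>s. \<Phi> (N + 1 - s) * dPP q r s)
        = integral {0..1} (\<lambda>s. (\<Phi> (N + 1 - s) - H) * dPP q r s)"
    proof -
      have i2: "(\<lambda>s. H * dPP q r s) integrable_on {0..1}" using integrable_on_mult_right[OF dPint, of H] by simp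
      have "integral {0..1} (\<lambda>s. (\<Phi> (N + 1 - s) - H) * dPP q r s)
          = integral {0..1} (\<lambda>s. \<Phi> (N + 1 - s) * dPP q r s - H * dPP q r s)"
        by (simp add: left_diff_distrib)
      also have "\<dots> = integral {0..1} (\<lambda>s. \<Phi> (N + 1 - s) * dPP q r s) - integral {0..1} (\<lambda>s. H * dPP q r s)"
        by (rule integral_diff[OF LS i2])
      also have "integral {0..1} (\<lambda>s. H * dPP q r s) = 0" using dP0 by simp
      finally show ?thesis by simp
    qed
    moreover have "0 \<le> (-1) ^ (k + q + 1) * integral {0..1} (\<lambda>s. (\<Phi> (N + 1 - s) - H) * dPP q r s)"
    proof (rule NN)
      fix s :: real assume s: "0 < s" "s < 1"
      have eqs: "(-1) ^ (k + q + 1) * ((\<Phi> (N + 1 - s) - H) * dPP q r s)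
          = - ((\<sigma> * \<Phi> (N + 1 - s) - \<sigma> * H) * (\<tau> * dPP q r s))"
        using sign_alg[of \<sigma> k \<tau> q "\<Phi> (N + 1 - s)" H "dPP q r s"] by (simp add: \<sigma>_def \<tau>_def)
      consider "s < c" | "s = c" | "c < s" by linarith
      then show "0 \<le> (-1) ^ (k + q + 1) * ((\<Phi> (N + 1 - s) - H) * dPP q r s)"
      proof cases
        case 1
        then have "(\<sigma> * \<Phi> (N + 1 - s) - \<sigma> * H) * (\<tau> * dPP q r s) \<le> 0"
          using mult_nonpos_nonneg[of "\<sigma> * \<Phi> (N + 1 - s) - \<sigma> * H" "\<tau> * dPP q r s"] mono_lo[OF 1] below[OF s(1) 1] by linarith
        then show ?thesis unfolding eqs by simp
      next
        case 2 then show ?thesis by (simp add: H_def)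
      next
        case 3
        then have "(\<sigma> * \<Phi> (N + 1 - s) - \<sigma> * H) * (\<tau> * dPP q r s) \<le> 0"
          using mult_nonneg_nonpos[of "\<sigma> * \<Phi> (N + 1 - s) - \<sigma> * H" "\<tau> * dPP q r s"] mono_hi[OF 3 s(2)] above[OF 3 s(2)] by linarith
        then show ?thesis unfolding eqs by simp
      qed
    qed
    ultimately have X: "0 \<le> (-1) ^ (k + q + 1) * integral {0..1} (\<lambda>s. \<Phi> (N + 1 - s) * dPP q r s)"
      by simp
    have E: "(-1) ^ (k + q + 1) * bdiff k (I_coef \<alpha> q r) n = (1 / Gamma (1 - \<alpha>)) * ((-1) ^ (k + q + 1) * integral {0..1} (\<lambda>s. \<Phi> (N + 1 - s) * dPP q r s))"
      unfolding LS' by (simp only: mult.left_commute)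
    show "(-1) ^ (k + q + 1) * bdiff k (I_coef \<alpha> q r) n \<ge> 0"
      unfolding E by (rule mult_nonneg_nonneg[OF less_imp_le[OF gpos] X])
  qed
qed

end
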